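(* If $P$ is a projection algebra, then $\mathbb F(P)$ and $\mathbb M(P)$ are projection-generated DRC-semigroups, with $\mathbf P(\mathbb F(P))\cong\mathbf P(\mathbb M(P))\cong P$ as projection algebras.
   Context: Maps are written on the right and composed left to right. A projection algebra is a set $P$ with maps $\theta_p,\delta_p:P\to P$ ($p\in P$) such that for all $p,q$: $p\theta_p=p$, $p\delta_p=p$; $p\theta_{q\theta_p}=q\theta_p$, $p\delta_{q\delta_p}=q\delta_p$; $\theta_q\theta_{q\theta_p}=\theta_q\theta_p$, $\delta_q\delta_{q\delta_p}=\delta_q\delta_p$; $\theta_p\delta_p=\theta_p$, $\delta_p\theta_p=\delta_p$; $\theta_{p\delta_q}\theta_p=\theta_q\theta_p$, $\delta_{p\theta_q}\delta_p=\delta_q\delta_p$. Isomorphisms are bijections preserving all $\theta_p,\delta_p$ operations. Write $p\,\mathscr F\,q$ iff $p=q\delta_p$ and $q=p\theta_q$. A DRC-semigroup is $(S,\cdot,D,R)$, $(S,\cdot)$ a semigroup, $D,R:S\to S$ with, for all $a,b$: $D(a)a=a$, $aR(a)=a$; $D(ab)=D(aD(b))$, $R(ab)=R(R(a)b)$; $D(ab)=D(a)D(ab)D(a)$, $R(ab)=R(b)R(ab)R(b)$; $R(D(a))=D(a)$, $D(R(a))=R(a)$. $\mathbf P(S)=\{D(a):a\in S\}$ is a projection algebra under $q\theta_p=R(qp)$, $q\delta_p=D(pq)$; $S$ is projection-generated if $\mathbf P(S)$ generates $S$ as a semigroup. $\mathbb F(P)$ is the semigroup presented by generators $x_p$ ($p\in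 P$) and relations $x_p^2=x_p$, $x_px_q=x_px_{p\theta_q}$, $x_px_q=x_{q\delta_p}x_q$ ($p,q\in P$). Every element of $\mathbb F(P)$ equals $\overline{x_{p_1}\cdots x_{p_k}}$ for some $p_1\mathscr F\cdots\mathscr F p_k$, and $p_1,p_k$ are determined by the element; unary operations are $D(\overline{x_{p_1}\cdots x_{p_k}})=\overline{x_{p_1}}$, $R(\overline{x_{p_1}\cdots x_{p_k}})=\overline{x_{p_k}}$. $\mathbb M(P)$ is the subsemigroup of $\mathcal T_P\times\mathcal T_P^{\mathrm{op}}$ ($\mathcal T_P$ the full transformation semigroup on $P$, product $(\alpha,\alpha')(\beta,\beta')=(\alpha\beta,\beta'\alpha')$) generated by $\hat p=(\theta_p,\delta_p)$, $p\in P$; every element equals $\hat p_1\cdots\hat p_k$ with $p_1\mathscr F\cdots\mathscr F p_k$, with $p_1,p_k$ determined, and $D(\hat p_1\cdots\hat p_k)=\hat p_1$, $R(\hat p_1\cdots\hat p_k)=\hat p_k$. *)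

theory Defs
  imports Main "HOL-Library.FuncSet"
begin

text \<open>Convention: a projection algebra is a carrier P with operations
  th p q = q\<theta>_p and dl p q = q\<delta>_p (maps written on the right,
  composed left to right).\<close>

definition proj_alg :: "'a set \<Rightarrow> ('a \<Rightarrow> 'a \<Rightarrow> 'a) \<Rightarrow> ('a \<Rightarrow> 'a \<Rightarrow> 'a) \<Rightarrow> bool" where
  "proj_alg P th dl \<longleftrightarrow>
     (\<forall>p\<in>P. \<forall>q\<in>P. th p q \<in> P \<and> dl p q \<in> P) \<and>
     (\<forall>p\<in>P. th p p = p \<and> dl p p = p) \<and>
     (\<forall>p\<in>P. \<forall>q\<in>P. th (th p q) p = th p q \<and> dl (dl p q) p = dl p q) \<and>
     (\<forall>p\<in>P. \<forall>q\<in>P. \<forall>r\<in>P. th (th p q) (th q r) = th p (th q r)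
                         \<and> dl (dl p q) (dl q r) = dl p (dl q r)) \<and>
     (\<forall>p\<in>P. \<forall>r\<in>P. dl p (th p r) = th p r \<and> th p (dl p r) = dl p r) \<and>
     (\<forall>p\<in>P. \<forall>q\<in>P. \<forall>r\<in>P. th p (th (dl q p) r) = th p (th q r)
                         \<and> dl p (dl (th q p) r) = dl p (dl q r))"

definition pa_iso :: "'a set \<Rightarrow> ('a \<Rightarrow> 'a \<Rightarrow> 'a) \<Rightarrow> ('a \<Rightarrow> 'a \<Rightarrow> 'a) \<Rightarrow>
    'b set \<Rightarrow> ('b \<Rightarrow> 'b \<Rightarrow> 'b) \<Rightarrow> ('b \<Rightarrow> 'b \<Rightarrow> 'b) \<Rightarrow> bool" where
  "pa_iso P1 th1 dl1 P2 th2 dl2 \<longleftrightarrow>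
     (\<exists>f. bij_betw f P1 P2 \<and>
          (\<forall>p\<in>P1. \<forall>q\<in>P1. f (th1 p q) = th2 (f p) (f q) \<and> f (dl1 p q) = dl2 (f p) (f q)))"

definition Frel :: "('a \<Rightarrow> 'a \<Rightarrow> 'a) \<Rightarrow> ('a \<Rightarrow> 'a \<Rightarrow> 'a) \<Rightarrow> 'a \<Rightarrow> 'a \<Rightarrow> bool" where
  "Frel th dl p q \<longleftrightarrow> p = dl p q \<and> q = th q p"

definition fchain :: "'a set \<Rightarrow> ('a \<Rightarrow> 'a \<Rightarrow> 'a) \<Rightarrow> ('a \<Rightarrow> 'a \<Rightarrow> 'a) \<Rightarrow> 'a list \<Rightarrow> bool" where
  "fchain P th dl ps \<longleftrightarrow> ps \<noteq> [] \<and> set ps \<subseteq> P \<and>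
     (\<forall>i. Suc i < length ps \<longrightarrow> Frel th dl (ps ! i) (ps ! Suc i))"

definition semigroup_on :: "'s set \<Rightarrow> ('s \<Rightarrow> 's \<Rightarrow> 's) \<Rightarrow> bool" where
  "semigroup_on S m \<longleftrightarrow> (\<forall>a\<in>S. \<forall>b\<in>S. m a b \<in> S) \<and>
     (\<forall>a\<in>S. \<forall>b\<in>S. \<forall>c\<in>S. m (m a b) c = m a (m b c))"

definition drc_semigroup :: "'s set \<Rightarrow> ('s \<Rightarrow> 's \<Rightarrow> 's) \<Rightarrow> ('s \<Rightarrow> 's) \<Rightarrow> ('s \<Rightarrow> 's) \<Rightarrow> bool" where
  "drc_semigroup S m D R \<longleftrightarrow> semigroup_on S m \<and>
     (\<forall>a\<in>S. D a \<in> S \<and> R a \<in> S) \<and>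
     (\<forall>a\<in>S. m (D a) a = a \<and> m a (R a) = a) \<and>
     (\<forall>a\<in>S. \<forall>b\<in>S. D (m a b) = D (m a (D b)) \<and> R (m a b) = R (m (R a) b)) \<and>
     (\<forall>a\<in>S. \<forall>b\<in>S. D (m a b) = m (m (D a) (D (m a b))) (D a)
                   \<and> R (m a b) = m (m (R b) (R (m a b))) (R b)) \<and>
     (\<forall>a\<in>S. R (D a) = D a \<and> D (R a) = R a)"

definition projs :: "'s set \<Rightarrow> ('s \<Rightarrow> 's) \<Rightarrow> 's set" where
  "projs S D = D ` S"

definition pth :: "('s \<Rightarrow> 's \<Rightarrow> 's) \<Rightarrow> ('s \<Rightarrow> 's) \<Rightarrow> 's \<Rightarrow> 's \<Rightarrow> 's" where
  "pth m R p q = R (m q p)"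

definition pdl :: "('s \<Rightarrow> 's \<Rightarrow> 's) \<Rightarrow> ('s \<Rightarrow> 's) \<Rightarrow> 's \<Rightarrow> 's \<Rightarrow> 's" where
  "pdl m D p q = D (m p q)"

inductive_set sgen :: "'s set \<Rightarrow> ('s \<Rightarrow> 's \<Rightarrow> 's) \<Rightarrow> 's set" for X m where
  base: "a \<in> X \<Longrightarrow> a \<in> sgen X m"
| mult: "a \<in> sgen X m \<Longrightarrow> b \<in> sgen X m \<Longrightarrow> m a b \<in> sgen X m"

definition proj_generated :: "'s set \<Rightarrow> ('s \<Rightarrow> 's \<Rightarrow> 's) \<Rightarrow> ('s \<Rightarrow> 's) \<Rightarrow> bool" where
  "proj_generated S m D \<longleftrightarrow> sgen (projs S D) m = S"

definition chainD :: "'a set \<Rightarrow> ('a \<Rightarrow> 'a \<Rightarrow> 'a) \<Rightarrow> ('a \<Rightarrow> 'a \<Rightarrow> 'a) \<Rightarrow> ('a \<Rightarrow> 's)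
    \<Rightarrow> ('a list \<Rightarrow> 's) \<Rightarrow> 's \<Rightarrow> 's" where
  "chainD P th dl gen prd a = gen (THE p. \<exists>ps. fchain P th dl ps \<and> hd ps = p \<and> prd ps = a)"

definition chainR :: "'a set \<Rightarrow> ('a \<Rightarrow> 'a \<Rightarrow> 'a) \<Rightarrow> ('a \<Rightarrow> 'a \<Rightarrow> 'a) \<Rightarrow> ('a \<Rightarrow> 's)
    \<Rightarrow> ('a list \<Rightarrow> 's) \<Rightarrow> 's \<Rightarrow> 's" where
  "chainR P th dl gen prd a = gen (THE p. \<exists>ps. fchain P th dl ps \<and> last ps = p \<and> prd ps = a)"

inductive fcong :: "'a set \<Rightarrow> ('a \<Rightarrow> 'a \<Rightarrow> 'a) \<Rightarrow> ('a \<Rightarrow> 'a \<Rightarrow> 'a) \<Rightarrow> 'a list \<Rightarrow> 'a list \<Rightarrow> bool"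
  for P th dl where
  rel_idem: "p \<in> P \<Longrightarrow> fcong P th dl [p, p] [p]"
| rel_th: "p \<in> P \<Longrightarrow> q \<in> P \<Longrightarrow> fcong P th dl [p, q] [p, th q p]"
| rel_dl: "p \<in> P \<Longrightarrow> q \<in> P \<Longrightarrow> fcong P th dl [p, q] [dl p q, q]"
| refl: "u \<noteq> [] \<Longrightarrow> set u \<subseteq> P \<Longrightarrow> fcong P th dl u u"
| sym: "fcong P th dl u v \<Longrightarrow> fcong P th dl v u"
| trans: "fcong P th dl u v \<Longrightarrow> fcong P th dl v w \<Longrightarrow> fcong P th dl u w"
| ctx: "fcong P th dl u v \<Longrightarrow> set xs \<subseteq> P \<Longrightarrow> set ys \<subseteq> P \<Longrightarrow>
        fcong P th dl (xs @ u @ ys) (xs @ v @ ys)"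

definition fclass :: "'a set \<Rightarrow> ('a \<Rightarrow> 'a \<Rightarrow> 'a) \<Rightarrow> ('a \<Rightarrow> 'a \<Rightarrow> 'a) \<Rightarrow> 'a list \<Rightarrow> 'a list set" where
  "fclass P th dl w = {v. fcong P th dl w v}"

definition Fcar :: "'a set \<Rightarrow> ('a \<Rightarrow> 'a \<Rightarrow> 'a) \<Rightarrow> ('a \<Rightarrow> 'a \<Rightarrow> 'a) \<Rightarrow> 'a list set set" where
  "Fcar P th dl = {fclass P th dl w | w. w \<noteq> [] \<and> set w \<subseteq> P}"

definition Fmult :: "'a set \<Rightarrow> ('a \<Rightarrow> 'a \<Rightarrow> 'a) \<Rightarrow> ('a \<Rightarrow> 'a \<Rightarrow> 'a) \<Rightarrow>
    'a list set \<Rightarrow> 'a list set \<Rightarrow> 'a list set" where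
  "Fmult P th dl A B = fclass P th dl ((SOME a. a \<in> A) @ (SOME b. b \<in> B))"

definition FD :: "'a set \<Rightarrow> ('a \<Rightarrow> 'a \<Rightarrow> 'a) \<Rightarrow> ('a \<Rightarrow> 'a \<Rightarrow> 'a) \<Rightarrow> 'a list set \<Rightarrow> 'a list set" where
  "FD P th dl = chainD P th dl (\<lambda>p. fclass P th dl [p]) (fclass P th dl)"

definition FR :: "'a set \<Rightarrow> ('a \<Rightarrow> 'a \<Rightarrow> 'a) \<Rightarrow> ('a \<Rightarrow> 'a \<Rightarrow> 'a) \<Rightarrow> 'a list set \<Rightarrow> 'a list set" where
  "FR P th dl = chainR P th dl (\<lambda>p. fclass P th dl [p]) (fclass P th dl)"

text \<open>Transformations of P are represented as extensional functions (undefined off P).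
  Composition left to right: \<alpha>\<beta> = compose P \<beta> \<alpha>; product
  (\<alpha>,\<alpha>')(\<beta>,\<beta>') = (\<alpha>\<beta>, \<beta>'\<alpha>').\<close>
definition Mmult :: "'a set \<Rightarrow> ('a \<Rightarrow> 'a) \<times> ('a \<Rightarrow> 'a) \<Rightarrow> ('a \<Rightarrow> 'a) \<times> ('a \<Rightarrow> 'a) \<Rightarrow> ('a \<Rightarrow> 'a) \<times> ('a \<Rightarrow> 'a)" where
  "Mmult P x y = (compose P (fst y) (fst x), compose P (snd x) (snd y))"

definition hat :: "'a set \<Rightarrow> ('a \<Rightarrow> 'a \<Rightarrow> 'a) \<Rightarrow> ('a \<Rightarrow> 'a \<Rightarrow> 'a) \<Rightarrow> 'a \<Rightarrow> ('a \<Rightarrow> 'a) \<times> ('a \<Rightarrow> 'a)" where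
  "hat P th dl p = (restrict (th p) P, restrict (dl p) P)"

definition Mcar :: "'a set \<Rightarrow> ('a \<Rightarrow> 'a \<Rightarrow> 'a) \<Rightarrow> ('a \<Rightarrow> 'a \<Rightarrow> 'a) \<Rightarrow> (('a \<Rightarrow> 'a) \<times> ('a \<Rightarrow> 'a)) set" where
  "Mcar P th dl = sgen (hat P th dl ` P) (Mmult P)"

definition Mword :: "'a set \<Rightarrow> ('a \<Rightarrow> 'a \<Rightarrow> 'a) \<Rightarrow> ('a \<Rightarrow> 'a \<Rightarrow> 'a) \<Rightarrow> 'a list \<Rightarrow> ('a \<Rightarrow> 'a) \<times> ('a \<Rightarrow> 'a)" where
  "Mword P th dl ps = foldl (Mmult P) (hat P th dl (hd ps)) (map (hat P th dl) (tl ps))"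

definition MD :: "'a set \<Rightarrow> ('a \<Rightarrow> 'a \<Rightarrow> 'a) \<Rightarrow> ('a \<Rightarrow> 'a \<Rightarrow> 'a) \<Rightarrow>
    ('a \<Rightarrow> 'a) \<times> ('a \<Rightarrow> 'a) \<Rightarrow> ('a \<Rightarrow> 'a) \<times> ('a \<Rightarrow> 'a)" where
  "MD P th dl = chainD P th dl (hat P th dl) (Mword P th dl)"

definition MR :: "'a set \<Rightarrow> ('a \<Rightarrow> 'a \<Rightarrow> 'a) \<Rightarrow> ('a \<Rightarrow> 'a \<Rightarrow> 'a) \<Rightarrow>
    ('a \<Rightarrow> 'a) \<times> ('a \<Rightarrow> 'a) \<Rightarrow> ('a \<Rightarrow> 'a) \<times> ('a \<Rightarrow> 'a)" where
  "MR P th dl = chainR P th dl (hat P th dl) (Mword P th dl)"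

end

theory Submission imports Defs begin

definition words :: "'a set \<Rightarrow> 'a list set" where
  "words P = {w. w \<noteq> [] \<and> set w \<subseteq> P}"

definition dapp :: "('a \<Rightarrow> 'a \<Rightarrow> 'a) \<Rightarrow> 'a list \<Rightarrow> 'a \<Rightarrow> 'a" where
  "dapp f w x = foldr f w x"
definition rapp :: "('a \<Rightarrow> 'a \<Rightarrow> 'a) \<Rightarrow> 'a list \<Rightarrow> 'a \<Rightarrow> 'a" where
  "rapp f w x = foldl (\<lambda>x p. f p x) x w"
definition Dw :: "('a \<Rightarrow> 'a \<Rightarrow> 'a) \<Rightarrow> 'a list \<Rightarrow> 'a" where
  "Dw f w = dapp f w (last w)"
definition Rw :: "('a \<Rightarrow> 'a \<Rightarrow> 'a) \<Rightarrow> 'a list \<Rightarrow> 'a" where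
  "Rw f w = rapp f w (hd w)"

lemma dapp_simps[simp]: "dapp f [] x = x" "dapp f (p # w) x = f p (dapp f w x)"
  "dapp f (u @ v) x = dapp f u (dapp f v x)"
  by (simp_all add: dapp_def)
lemma rapp_simps[simp]: "rapp f [] x = x" "rapp f (p # w) x = rapp f w (f p x)"
  "rapp f (u @ v) x = rapp f v (rapp f u x)"
  by (simp_all add: rapp_def)
lemma rapp_rev: "rapp f w x = dapp f (rev w) x"
  by (simp add: rapp_def dapp_def foldr_conv_foldl)
lemma Rw_rev: "w \<noteq> [] \<Longrightarrow> Rw f w = Dw f (rev w)"
  by (simp add: Rw_def Dw_def rapp_rev last_rev)

lemma words_iff: "w \<in> words P \<longleftrightarrow> w \<noteq> [] \<and> set w \<subseteq> P" by (simp add: words_def)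

lemma pa_swap: "proj_alg P th dl \<Longrightarrow> proj_alg P dl th"
  unfolding proj_alg_def by blast

fun fwd :: "('a \<Rightarrow> 'a \<Rightarrow> 'a) \<Rightarrow> 'a \<Rightarrow> 'a list \<Rightarrow> 'a list" where
  "fwd f x [] = [x]"
| "fwd f x (w # ws) = x # fwd f (f w x) ws"

fun bwd :: "('a \<Rightarrow> 'a \<Rightarrow> 'a) \<Rightarrow> 'a list \<Rightarrow> 'a list" where
  "bwd g [] = []"
| "bwd g [x] = [x]"
| "bwd g (x # y # ys) = (let r = bwd g (y # ys) in g x (hd r) # r)"

fun linked :: "('a \<Rightarrow> 'a \<Rightarrow> 'a) \<Rightarrow> 'a list \<Rightarrow> bool" where
  "linked f [] = True"
| "linked f [x] = True"
| "linked f (x # y # ys) = (y = f y x \<and> linked f (y # ys))"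

lemma fchain_single: "fchain P th dl [p] \<longleftrightarrow> p \<in> P"
  by (simp add: fchain_def)

lemma fchain_cons2: "fchain P th dl (p # q # r) \<longleftrightarrow> p \<in> P \<and> Frel th dl p q \<and> fchain P th dl (q # r)"
proof
  assume h: "fchain P th dl (p # q # r)"
  have "Frel th dl p q" using h unfolding fchain_def by fastforce
  moreover have "fchain P th dl (q # r)" using h unfolding fchain_def
    by auto
  ultimately show "p \<in> P \<and> Frel th dl p q \<and> fchain P th dl (q # r)" using h by (simp add: fchain_def)
next
  assume h: "p \<in> P \<and> Frel th dl p q \<and> fchain P th dl (q # r)"
  show "fchain P th dl (p # q # r)" unfolding fchain_def
  proof (intro conjI allI impI)
    show "p # q # r \<noteq> []" by simp
    show "set (p # q # r) \<subseteq> P" using h by (simp add: fchain_def)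
    fix i assume i: "Suc i < length (p # q # r)"
    show "Frel th dl ((p # q # r) ! i) ((p # q # r) ! Suc i)"
    proof (cases i)
      case 0 then show ?thesis using h by simp
    next
      case (Suc j) then show ?thesis using h i unfolding fchain_def by simp
    qed
  qed
qed

locale pa =
  fixes P :: "'a set" and th dl :: "'a \<Rightarrow> 'a \<Rightarrow> 'a"
  assumes A: "proj_alg P th dl"
begin

lemma th_P[simp]: "a \<in> P \<Longrightarrow> b \<in> P \<Longrightarrow> th a b \<in> P" using A unfolding proj_alg_def by blast
lemma dl_P[simp]: "a \<in> P \<Longrightarrow> b \<in> P \<Longrightarrow> dl a b \<in> P" using A unfolding proj_alg_def by blast
lemma A1[simp]: "a \<in> P \<Longrightarrow> th a a = a" "a \<in> P \<Longrightarrow> dl a a = a" using A unfolding proj_alg_def by blast+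
lemma A2: "a \<in> P \<Longrightarrow> b \<in> P \<Longrightarrow> th (th a b) a = th a b"
  "a \<in> P \<Longrightarrow> b \<in> P \<Longrightarrow> dl (dl a b) a = dl a b" using A unfolding proj_alg_def by blast+
lemma A3: "a \<in> P \<Longrightarrow> b \<in> P \<Longrightarrow> c \<in> P \<Longrightarrow> th (th a b) (th b c) = th a (th b c)"
  "a \<in> P \<Longrightarrow> b \<in> P \<Longrightarrow> c \<in> P \<Longrightarrow> dl (dl a b) (dl b c) = dl a (dl b c)"
  using A unfolding proj_alg_def by blast+
lemma A4: "a \<in> P \<Longrightarrow> c \<in> P \<Longrightarrow> dl a (th a c) = th a c"
  "a \<in> P \<Longrightarrow> c \<in> P \<Longrightarrow> th a (dl a c) = dl a c"
  using A unfolding proj_alg_def by blast+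
lemma A5: "a \<in> P \<Longrightarrow> b \<in> P \<Longrightarrow> c \<in> P \<Longrightarrow> th a (th (dl b a) c) = th a (th b c)"
  "a \<in> P \<Longrightarrow> b \<in> P \<Longrightarrow> c \<in> P \<Longrightarrow> dl a (dl (th b a) c) = dl a (dl b c)"
  using A unfolding proj_alg_def by blast+

lemma idem[simp]: "a \<in> P \<Longrightarrow> x \<in> P \<Longrightarrow> dl a (dl a x) = dl a x"
   "a \<in> P \<Longrightarrow> x \<in> P \<Longrightarrow> th a (th a x) = th a x"
  by (metis A4 dl_P th_P)+

lemma D2: "p \<in> P \<Longrightarrow> q \<in> P \<Longrightarrow> th (th q p) p = th q p"
  "p \<in> P \<Longrightarrow> q \<in> P \<Longrightarrow> dl (dl q p) p = dl q p"
  using A3[of q p p] by auto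

lemma D3: "p \<in> P \<Longrightarrow> q \<in> P \<Longrightarrow> th q (dl p q) = th q p"
proof -
  assume p: "p \<in> P" and q: "q \<in> P"
  have "th (dl p q) p = dl p q"
    using A2(1)[of p "dl p q"] A4(2)[of p q] p q by simp
  then show ?thesis using A5(1)[of q p p] p q by simp
qed

lemma D3': "p \<in> P \<Longrightarrow> q \<in> P \<Longrightarrow> dl q (th p q) = dl q p"
proof -
  assume p: "p \<in> P" and q: "q \<in> P"
  have "dl (th p q) p = th p q"
    using A2(2)[of p "th p q"] A4(1)[of p q] p q by simp
  then show ?thesis using A5(2)[of q p p] p q by simp
qed

lemma lemL: "x \<in> P \<Longrightarrow> q \<in> P \<Longrightarrow> p \<in> P \<Longrightarrow> dl q x = x \<Longrightarrow> th q p = q \<Longrightarrow> th x p = x"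
proof -
  assume x: "x \<in> P" and q: "q \<in> P" and p: "p \<in> P" and h1: "dl q x = x" and h2: "th q p = q"
  have "th x (th x p) = th x (th q p)" using A5(1)[of x q p] x q p h1 by simp
  hence e: "th x p = th x q" using x p h2 by simp
  have "th q x = x" using A4(2)[of q x] h1 q x by simp
  hence "th x q = x" using A2(1)[of q x] q x by simp
  with e show ?thesis by simp
qed

lemma antisym: "a \<in> P \<Longrightarrow> b \<in> P \<Longrightarrow> dl b a = a \<Longrightarrow> dl a b = b \<Longrightarrow> a = b"
  by (metis A2(1) A4(2))

lemma le_th: "a \<in> P \<Longrightarrow> x \<in> P \<Longrightarrow> dl a x = x \<Longrightarrow> th a x = x"
  by (metis A4(2))

lemma dapp_P[simp]: "set w \<subseteq> P \<Longrightarrow> x \<in> P \<Longrightarrow> dapp dl w x \<in> P"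
  by (induction w) auto
lemma rapp_P[simp]: "set w \<subseteq> P \<Longrightarrow> x \<in> P \<Longrightarrow> rapp th w x \<in> P"
  by (induction w arbitrary: x) auto
lemma Dw_P: "w \<in> words P \<Longrightarrow> Dw dl w \<in> P"
  by (auto simp: Dw_def words_iff intro!: dapp_P)
lemma Rw_P: "w \<in> words P \<Longrightarrow> Rw th w \<in> P"
  by (auto simp: Rw_def words_iff intro!: rapp_P)

lemma fc_W: "fcong P th dl u v \<Longrightarrow> u \<in> words P \<and> v \<in> words P"
  by (induction rule: fcong.induct) (auto simp: words_iff)

lemma fc_inv:
  assumes "fcong P th dl u v"
  shows "(\<forall>x\<in>P. rapp th u x = rapp th v x) \<and> (\<forall>x\<in>P. dapp dl u x = dapp dl v x)
     \<and> Rw th u = Rw th v \<and> Dw dl u = Dw dl v"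
  using assms
proof (induction rule: fcong.induct)
  case (rel_idem p)
  then show ?case by (simp add: Rw_def Dw_def)
next
  case (rel_th p q)
  then show ?case by (simp add: Rw_def Dw_def A3 A5 D2 D3')
next
  case (rel_dl p q)
  then show ?case by (simp add: Rw_def Dw_def A3 A5 D2 D3)
next
  case (refl u)
  then show ?case by simp
next
  case (sym u v)
  then show ?case by simp
next
  case (trans u v w)
  then show ?case by simp
next
  case (ctx u v xs ys)
  from fc_W[OF ctx.hyps(1)] have u: "u \<noteq> []" "set u \<subseteq> P" and v: "v \<noteq> []" "set v \<subseteq> P"
    by (auto simp: words_iff)
  have r: "\<forall>x\<in>P. rapp th (xs @ u @ ys) x = rapp th (xs @ v @ ys) x"
    using ctx by simp
  have d: "\<forall>x\<in>P. dapp dl (xs @ u @ ys) x = dapp dl (xs @ v @ ys) x"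
    using ctx by simp
  have R: "Rw th (xs @ u @ ys) = Rw th (xs @ v @ ys)"
  proof (cases xs)
    case Nil
    then show ?thesis using ctx.IH u v by (simp add: Rw_def)
  next
    case (Cons a l)
    then show ?thesis using ctx u v by (simp add: Rw_def)
  qed
  have D: "Dw dl (xs @ u @ ys) = Dw dl (xs @ v @ ys)"
  proof (cases "ys = []")
    case True
    then show ?thesis using ctx.IH u v by (simp add: Dw_def)
  next
    case False
    then have "dapp dl ys (last ys) \<in> P" using ctx.hyps(3) by (auto intro!: dapp_P)
    then show ?thesis using ctx u v False by (simp add: Dw_def)
  qed
  show ?case using r d R D by blast
qed


lemma chain_DR: "fchain P th dl ps \<Longrightarrow> Dw dl ps = hd ps \<and> Rw th ps = last ps"
proof (induction ps rule: induct_list012)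
  case 1 then show ?case by (simp add: fchain_def)
next
  case (2 x) then show ?case by (simp add: fchain_single Dw_def Rw_def)
next
  case (3 x y zs)
  have h: "x \<in> P" "Frel th dl x y" "fchain P th dl (y # zs)" using 3(3) by (simp_all add: fchain_cons2)
  have y: "y \<in> P" using h(3) by (simp add: fchain_def)
  have IH: "Dw dl (y # zs) = y" "Rw th (y # zs) = last (y # zs)" using 3(2) h(3) by auto
  have "Dw dl (x # y # zs) = dl x (Dw dl (y # zs))" by (simp add: Dw_def)
  also have "... = x" using IH h(2) by (simp add: Frel_def)
  finally have d: "Dw dl (x # y # zs) = x" .
  have "Rw th (x # y # zs) = rapp th zs (th y x)" using h(1) by (simp add: Rw_def)
  also have "... = rapp th zs y" using h(2) by (simp add: Frel_def)
  also have "... = Rw th (y # zs)" using y by (simp add: Rw_def)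
  finally show ?case using d IH by simp
qed

lemma fwd_lem: "x \<in> P \<Longrightarrow> set ws \<subseteq> P \<Longrightarrow>
   fcong P th dl (x # ws) (fwd th x ws) \<and> linked th (fwd th x ws) \<and> set (fwd th x ws) \<subseteq> P
   \<and> hd (fwd th x ws) = x \<and> fwd th x ws \<noteq> []"
proof (induction ws arbitrary: x)
  case Nil then show ?case by (auto intro: fcong.refl)
next
  case (Cons w ws)
  have w: "w \<in> P" "set ws \<subseteq> P" using Cons.prems by auto
  let ?t = "th w x"
  have t: "?t \<in> P" using w Cons.prems by simp
  note IH = Cons.IH[OF t w(2)]
  have c1: "fcong P th dl (x # w # ws) (x # ?t # ws)"
    using fcong.ctx[OF fcong.rel_th[of x P w th dl], of "[]" ws] Cons.prems w by simp
  have c2: "fcong P th dl (x # ?t # ws) (x # fwd th ?t ws)"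
    using fcong.ctx[OF conjunct1[OF IH], of "[x]" "[]"] Cons.prems by simp
  have lk: "linked th (x # fwd th ?t ws)"
  proof -
    obtain r where r: "fwd th ?t ws = ?t # r" using IH by (cases "fwd th ?t ws") auto
    have "?t = th ?t x" using D2(1)[of x w] Cons.prems w by simp
    then show ?thesis using IH r by simp
  qed
  show ?case using fcong.trans[OF c1 c2] lk IH Cons.prems by simp
qed

lemma bwd_lem: "linked th ys \<Longrightarrow> ys \<noteq> [] \<Longrightarrow> set ys \<subseteq> P \<Longrightarrow>
   fchain P th dl (bwd dl ys) \<and> dl (hd ys) (hd (bwd dl ys)) = hd (bwd dl ys)
   \<and> fcong P th dl ys (bwd dl ys)"
proof (induction ys rule: induct_list012)
  case 1 then show ?case by simp
next
  case (2 x) then show ?case by (auto simp: fchain_single intro: fcong.refl)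
next
  case (3 x y ys)
  have x: "x \<in> P" and yy: "y \<in> P" "set ys \<subseteq> P" using 3(5) by auto
  have lk: "y = th y x" "linked th (y # ys)" using 3(3) by auto
  define r where "r = bwd dl (y # ys)"
  have IH: "fchain P th dl r" "dl y (hd r) = hd r" "fcong P th dl (y # ys) r"
    using 3(2)[OF lk(2)] yy unfolding r_def by auto
  obtain r1 rt where r: "r = r1 # rt" using IH(1) by (cases r) (auto simp: fchain_def)
  have r1: "r1 \<in> P" using IH(1) r by (simp add: fchain_def)
  have e: "dl y r1 = r1" using IH(2) r by simp
  have L: "th r1 x = r1" using lemL[OF r1 yy(1) x e] lk(1) by simp
  let ?r0 = "dl x r1"
  have fr: "Frel th dl ?r0 r1"
    unfolding Frel_def
  proof
    show "dl x r1 = dl (dl x r1) r1" using A3(2)[of x r1 r1] x r1 by simp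
    show "r1 = th r1 (dl x r1)" using D3[of x r1] x r1 L by simp
  qed
  have ch: "fchain P th dl (?r0 # r)" using fr IH(1) r x r1 by (simp add: fchain_cons2)
  have c1: "fcong P th dl (x # y # ys) (x # r)"
    using fcong.ctx[OF IH(3), of "[x]" "[]"] x by simp
  have rtP: "set rt \<subseteq> P" using IH(1) r by (simp add: fchain_def)
  have c2: "fcong P th dl (x # r) (?r0 # r)"
    using fcong.ctx[OF fcong.rel_dl[OF x r1], of "[]" rt] rtP r by simp
  have bw: "bwd dl (x # y # ys) = ?r0 # r" using r unfolding r_def by (simp add: Let_def)
  show ?case using bw ch fcong.trans[OF c1 c2] x r1 by simp
qed

lemma reduce: "w \<in> words P \<Longrightarrow> \<exists>c. fchain P th dl c \<and> fcong P th dl w c"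
proof -
  assume "w \<in> words P"
  then obtain x ws where w: "w = x # ws" "x \<in> P" "set ws \<subseteq> P"
    by (cases w) (auto simp: words_iff)
  note F = fwd_lem[OF w(2,3)]
  note B = bwd_lem[of "fwd th x ws"]
  have "fchain P th dl (bwd dl (fwd th x ws)) \<and> fcong P th dl (fwd th x ws) (bwd dl (fwd th x ws))"
    using F B by blast
  then show ?thesis using F w fcong.trans by blast
qed

lemma le_D: "w \<in> words P \<Longrightarrow> y \<in> P \<Longrightarrow> dl (Dw dl w) (dapp dl w y) = dapp dl w y"
proof (induction w)
  case Nil then show ?case by (simp add: words_iff)
next
  case (Cons p w)
  have p: "p \<in> P" and wP: "set w \<subseteq> P" using Cons.prems by (auto simp: words_iff)
  show ?case
  proof (cases "w = []")
    case True then show ?thesis using p Cons.prems by (simp add: Dw_def)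
  next
    case False
    then have ww: "w \<in> words P" using wP by (simp add: words_iff)
    let ?e = "Dw dl w" and ?z = "dapp dl w y"
    have e: "?e \<in> P" using Dw_P[OF ww] .
    have z: "?z \<in> P" using wP Cons.prems by simp
    have ez: "dl ?e ?z = ?z" using Cons.IH[OF ww Cons.prems(2)] .
    have De: "Dw dl (p # w) = dl p ?e" using False by (simp add: Dw_def)
    have "dl p ?z = dl (dl p ?e) (dl ?e ?z)" using A3(2)[of p ?e ?z] p e z ez by simp
    hence "dl (dl p ?e) (dl p ?z) = dl p ?z" using ez p e z by (metis idem(1) dl_P)
    then show ?thesis using De by simp
  qed
qed

lemma D_det: "u \<in> words P \<Longrightarrow> v \<in> words P \<Longrightarrow> \<forall>y\<in>P. dapp dl u y = dapp dl v y \<Longrightarrow>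
   Dw dl u = Dw dl v"
proof -
  assume u: "u \<in> words P" and v: "v \<in> words P" and h: "\<forall>y\<in>P. dapp dl u y = dapp dl v y"
  have lu: "last u \<in> P" and lv: "last v \<in> P" using u v by (auto simp: words_iff)
  have 1: "dl (Dw dl v) (Dw dl u) = Dw dl u"
    using le_D[OF v lv] le_D[OF v lu] h lu by (simp add: Dw_def)
  have 2: "dl (Dw dl u) (Dw dl v) = Dw dl v"
    using le_D[OF u lu] le_D[OF u lv] h lv by (simp add: Dw_def)
  show ?thesis using antisym[OF Dw_P[OF u] Dw_P[OF v] 1 2] .
qed


lemma le_R: "w \<in> words P \<Longrightarrow> y \<in> P \<Longrightarrow> th (Rw th w) (rapp th w y) = rapp th w y"
proof -
  assume w: "w \<in> words P" and y: "y \<in> P"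
  interpret s: pa P dl th using pa_swap[OF A] by unfold_locales
  have rw: "rev w \<in> words P" using w by (simp add: words_iff)
  show ?thesis using s.le_D[OF rw y] w by (simp add: Rw_rev rapp_rev words_iff)
qed

lemma R_det: "u \<in> words P \<Longrightarrow> v \<in> words P \<Longrightarrow> \<forall>y\<in>P. rapp th u y = rapp th v y \<Longrightarrow>
   Rw th u = Rw th v"
proof -
  assume u: "u \<in> words P" and v: "v \<in> words P" and h: "\<forall>y\<in>P. rapp th u y = rapp th v y"
  interpret s: pa P dl th using pa_swap[OF A] by unfold_locales
  have "rev u \<in> words P" "rev v \<in> words P" using u v by (auto simp: words_iff)
  from s.D_det[OF this] h u v show ?thesis by (simp add: Rw_rev rapp_rev words_iff)
qed

lemma W1: "u \<in> words P \<Longrightarrow> fcong P th dl ([Dw dl u] @ u) u"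
proof -
  assume u: "u \<in> words P"
  obtain c where c: "fchain P th dl c" "fcong P th dl u c" using reduce[OF u] by blast
  have "Dw dl u = hd c" using fc_inv[OF c(2)] chain_DR[OF c(1)] by simp
  moreover obtain h t where ht: "c = h # t" using c(1) by (cases c) (auto simp: fchain_def)
  moreover have hP: "h \<in> P" "set t \<subseteq> P" using c(1) ht by (auto simp: fchain_def)
  ultimately have e: "[Dw dl u] @ u = [h] @ u" by simp
  have 1: "fcong P th dl ([h] @ u) ([h] @ c)" using fcong.ctx[OF c(2), of "[h]" "[]"] hP by simp
  have 2: "fcong P th dl ([h] @ c) c" using fcong.ctx[OF fcong.rel_idem[of h P th dl, OF hP(1)], of "[]" t] hP ht by simp
  show ?thesis using e fcong.trans[OF fcong.trans[OF 1 2] fcong.sym[OF c(2)]] by simp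
qed

lemma W1': "u \<in> words P \<Longrightarrow> fcong P th dl (u @ [Rw th u]) u"
proof -
  assume u: "u \<in> words P"
  obtain c where c: "fchain P th dl c" "fcong P th dl u c" using reduce[OF u] by blast
  have "Rw th u = last c" using fc_inv[OF c(2)] chain_DR[OF c(1)] by simp
  moreover obtain b l where bl: "c = b @ [l]" using c(1) by (cases c rule: rev_cases) (auto simp: fchain_def)
  moreover have lP: "l \<in> P" "set b \<subseteq> P" using c(1) bl by (auto simp: fchain_def)
  ultimately have e: "u @ [Rw th u] = u @ [l]" by simp
  have 1: "fcong P th dl (u @ [l]) (c @ [l])" using fcong.ctx[OF c(2), of "[]" "[l]"] lP by simp
  have 2: "fcong P th dl (c @ [l]) c" using fcong.ctx[OF fcong.rel_idem[of l P th dl, OF lP(1)], of b "[]"] lP bl by simp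
  show ?thesis using e fcong.trans[OF fcong.trans[OF 1 2] fcong.sym[OF c(2)]] by simp
qed

lemma W3: "x \<in> P \<Longrightarrow> d \<in> P \<Longrightarrow> dl d x = x \<Longrightarrow> fcong P th dl [d, x, d] [x]"
proof -
  assume x: "x \<in> P" and d: "d \<in> P" and h: "dl d x = x"
  have t: "th d x = x" using le_th[OF d x h] .
  have 1: "fcong P th dl [d, x, d] [x, x, d]"
    using fcong.ctx[OF fcong.rel_dl[of d P x th dl, OF d x], of "[]" "[d]"] h d by simp
  have 2: "fcong P th dl [x, x, d] [x, d]"
    using fcong.ctx[OF fcong.rel_idem[of x P th dl, OF x], of "[]" "[d]"] d by simp
  have 3: "fcong P th dl [x, d] [x, x]" using fcong.rel_th[of x P d th dl, OF x d] t by simp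
  have 4: "fcong P th dl [x, x] [x]" using fcong.rel_idem[of x P th dl, OF x] .
  show ?thesis using 1 2 3 4 fcong.trans by metis
qed

lemma words_app: "u \<in> words P \<Longrightarrow> v \<in> words P \<Longrightarrow> u @ v \<in> words P"
  by (auto simp: words_iff)
lemma words_single: "p \<in> P \<Longrightarrow> [p] \<in> words P"
  by (auto simp: words_iff)

lemma Dw_app: "v \<noteq> [] \<Longrightarrow> Dw dl (u @ v) = dapp dl u (Dw dl v)"
  by (simp add: Dw_def)
lemma Rw_app: "u \<noteq> [] \<Longrightarrow> Rw th (u @ v) = rapp th v (Rw th u)"
  by (simp add: Rw_def)

lemma chainD_eq:
  assumes G3: "\<And>u v. fcong P th dl u v \<Longrightarrow> cl u = cl v"
    and G4: "\<And>u v. u \<in> words P \<Longrightarrow> v \<in> words P \<Longrightarrow> cl u = cl v \<Longrightarrow> Dw dl u = Dw dl v \<and> Rw th u = Rw th v"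
    and u: "u \<in> words P"
  shows "chainD P th dl (\<lambda>p. cl [p]) cl (cl u) = cl [Dw dl u]"
    and "chainR P th dl (\<lambda>p. cl [p]) cl (cl u) = cl [Rw th u]"
proof -
  obtain c where c: "fchain P th dl c" "fcong P th dl u c" using reduce[OF u] by blast
  have cc: "cl c = cl u" using G3[OF c(2)] by simp
  have cd: "hd c = Dw dl u" "last c = Rw th u" using fc_inv[OF c(2)] chain_DR[OF c(1)] by simp_all
  have fw: "\<And>ps. fchain P th dl ps \<Longrightarrow> ps \<in> words P" by (simp add: fchain_def words_iff)
  have "(THE p. \<exists>ps. fchain P th dl ps \<and> hd ps = p \<and> cl ps = cl u) = Dw dl u"
  proof (rule the_equality)
    show "\<exists>ps. fchain P th dl ps \<and> hd ps = Dw dl u \<and> cl ps = cl u" using c cc cd by blast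
    fix p assume "\<exists>ps. fchain P th dl ps \<and> hd ps = p \<and> cl ps = cl u"
    then obtain ps where ps: "fchain P th dl ps" "hd ps = p" "cl ps = cl u" by blast
    show "p = Dw dl u" using G4[OF fw[OF ps(1)] u ps(3)] chain_DR[OF ps(1)] ps(2) by simp
  qed
  then show "chainD P th dl (\<lambda>p. cl [p]) cl (cl u) = cl [Dw dl u]" by (simp add: chainD_def)
  have "(THE p. \<exists>ps. fchain P th dl ps \<and> last ps = p \<and> cl ps = cl u) = Rw th u"
  proof (rule the_equality)
    show "\<exists>ps. fchain P th dl ps \<and> last ps = Rw th u \<and> cl ps = cl u" using c cc cd by blast
    fix p assume "\<exists>ps. fchain P th dl ps \<and> last ps = p \<and> cl ps = cl u"
    then obtain ps where ps: "fchain P th dl ps" "last ps = p" "cl ps = cl u" by blast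
    show "p = Rw th u" using G4[OF fw[OF ps(1)] u ps(3)] chain_DR[OF ps(1)] ps(2) by simp
  qed
  then show "chainR P th dl (\<lambda>p. cl [p]) cl (cl u) = cl [Rw th u]" by (simp add: chainR_def)
qed

lemma generic:
  fixes S :: "'s set" and m :: "'s \<Rightarrow> 's \<Rightarrow> 's" and cl :: "'a list \<Rightarrow> 's"
  assumes G1: "S = cl ` words P"
    and G2: "\<And>u v. u \<in> words P \<Longrightarrow> v \<in> words P \<Longrightarrow> m (cl u) (cl v) = cl (u @ v)"
    and G3: "\<And>u v. fcong P th dl u v \<Longrightarrow> cl u = cl v"
    and G4: "\<And>u v. u \<in> words P \<Longrightarrow> v \<in> words P \<Longrightarrow> cl u = cl v \<Longrightarrow> Dw dl u = Dw dl v \<and> Rw th u = Rw th v"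
  shows "drc_semigroup S m (chainD P th dl (\<lambda>p. cl [p]) cl) (chainR P th dl (\<lambda>p. cl [p]) cl)
     \<and> proj_generated S m (chainD P th dl (\<lambda>p. cl [p]) cl)
     \<and> bij_betw (\<lambda>p. cl [p]) P (projs S (chainD P th dl (\<lambda>p. cl [p]) cl))
     \<and> (\<forall>p\<in>P. \<forall>q\<in>P. cl [th p q] = pth m (chainR P th dl (\<lambda>p. cl [p]) cl) (cl [p]) (cl [q])
                     \<and> cl [dl p q] = pdl m (chainD P th dl (\<lambda>p. cl [p]) cl) (cl [p]) (cl [q]))"
proof -
  define D where "D = chainD P th dl (\<lambda>p. cl [p]) cl"
  define R where "R = chainR P th dl (\<lambda>p. cl [p]) cl"
  have Dc: "\<And>u. u \<in> words P \<Longrightarrow> D (cl u) = cl [Dw dl u]"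
    unfolding D_def using chainD_eq(1)[where cl=cl, OF G3 G4] by blast
  have Rc: "\<And>u. u \<in> words P \<Longrightarrow> R (cl u) = cl [Rw th u]"
    unfolding R_def using chainD_eq(2)[where cl=cl, OF G3 G4] by blast
  have all1: "\<And>Q. (\<And>u. u \<in> words P \<Longrightarrow> Q (cl u)) \<Longrightarrow> \<forall>a\<in>S. Q a" using G1 by blast
  have all2: "\<And>Q. (\<And>u v. u \<in> words P \<Longrightarrow> v \<in> words P \<Longrightarrow> Q (cl u) (cl v)) \<Longrightarrow> \<forall>a\<in>S. \<forall>b\<in>S. Q a b"
    using G1 by blast
  have all3: "\<And>Q. (\<And>u v w. u \<in> words P \<Longrightarrow> v \<in> words P \<Longrightarrow> w \<in> words P \<Longrightarrow> Q (cl u) (cl v) (cl w))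
      \<Longrightarrow> \<forall>a\<in>S. \<forall>b\<in>S. \<forall>c\<in>S. Q a b c"
    using G1 by blast
  have inS: "\<And>u. u \<in> words P \<Longrightarrow> cl u \<in> S" using G1 by blast
  have sg: "semigroup_on S m" unfolding semigroup_on_def
  proof
    show "\<forall>a\<in>S. \<forall>b\<in>S. m a b \<in> S" by (rule all2) (simp add: G2 inS words_app)
    show "\<forall>a\<in>S. \<forall>b\<in>S. \<forall>c\<in>S. m (m a b) c = m a (m b c)" by (rule all3) (simp add: G2 words_app)
  qed
  have c1: "\<forall>a\<in>S. D a \<in> S \<and> R a \<in> S"
    by (rule all1) (simp add: Dc Rc inS words_single Dw_P Rw_P)
  have c2: "\<forall>a\<in>S. m (D a) a = a \<and> m a (R a) = a"
  proof (rule all1)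
    fix u assume u: "u \<in> words P"
    have s: "[Dw dl u] \<in> words P" "[Rw th u] \<in> words P" using u by (simp_all add: words_single Dw_P Rw_P)
    show "m (D (cl u)) (cl u) = cl u \<and> m (cl u) (R (cl u)) = cl u"
      using G2[OF s(1) u] G2[OF u s(2)] Dc[OF u] Rc[OF u] G3[OF W1[OF u]] G3[OF W1'[OF u]] by simp
  qed
  have c3: "\<forall>a\<in>S. \<forall>b\<in>S. D (m a b) = D (m a (D b)) \<and> R (m a b) = R (m (R a) b)"
  proof (rule all2)
    fix u v assume u: "u \<in> words P" and v: "v \<in> words P"
    have s: "[Dw dl v] \<in> words P" "[Rw th u] \<in> words P" using u v by (simp_all add: words_single Dw_P Rw_P)
    have ne: "u \<noteq> []" "v \<noteq> []" using u v by (auto simp: words_iff)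
    have e1: "Dw dl (u @ v) = Dw dl (u @ [Dw dl v])" using ne Dw_P[OF v] by (simp add: Dw_app) (simp add: Dw_def)
    have e2: "Rw th (u @ v) = Rw th ([Rw th u] @ v)" using ne Rw_P[OF u] by (simp add: Rw_app) (simp add: Rw_def)
    show "D (m (cl u) (cl v)) = D (m (cl u) (D (cl v))) \<and> R (m (cl u) (cl v)) = R (m (R (cl u)) (cl v))"
      using G2[OF u v] G2[OF u s(1)] G2[OF s(2) v] Dc[OF v] Rc[OF u] Dc[OF words_app[OF u v]]
        Dc[OF words_app[OF u s(1)]] Rc[OF words_app[OF u v]] Rc[OF words_app[OF s(2) v]] e1 e2 by simp
  qed
  have c4: "\<forall>a\<in>S. \<forall>b\<in>S. D (m a b) = m (m (D a) (D (m a b))) (D a) \<and> R (m a b) = m (m (R b) (R (m a b))) (R b)"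
  proof (rule all2)
    fix u v assume u: "u \<in> words P" and v: "v \<in> words P"
    have uv: "u @ v \<in> words P" using words_app[OF u v] .
    have ne: "u \<noteq> []" "v \<noteq> []" using u v by (auto simp: words_iff)
    let ?d = "Dw dl u" and ?x = "Dw dl (u @ v)" and ?r = "Rw th v" and ?y = "Rw th (u @ v)"
    have P: "?d \<in> P" "?x \<in> P" "?r \<in> P" "?y \<in> P" using Dw_P Rw_P u v uv by auto
    have le1: "dl ?d ?x = ?x" using le_D[OF u Dw_P[OF v]] ne by (simp add: Dw_app)
    have le2': "th ?r ?y = ?y" using le_R[OF v Rw_P[OF u]] ne by (simp add: Rw_app)
    have le2: "dl ?r ?y = ?y" using A4(1)[of ?r ?y] P le2' by simp
    have s: "[?d] \<in> words P" "[?x] \<in> words P" "[?r] \<in> words P" "[?y] \<in> words P"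
      using P by (simp_all add: words_single)
    have m1: "m (m (cl [?d]) (cl [?x])) (cl [?d]) = cl [?d, ?x, ?d]"
      using G2[OF s(1) s(2)] G2[OF words_app[OF s(1) s(2)] s(1)] by simp
    have m2: "m (m (cl [?r]) (cl [?y])) (cl [?r]) = cl [?r, ?y, ?r]"
      using G2[OF s(3) s(4)] G2[OF words_app[OF s(3) s(4)] s(3)] by simp
    show "D (m (cl u) (cl v)) = m (m (D (cl u)) (D (m (cl u) (cl v)))) (D (cl u)) \<and>
          R (m (cl u) (cl v)) = m (m (R (cl v)) (R (m (cl u) (cl v)))) (R (cl v))"
      using G2[OF u v] Dc[OF u] Dc[OF uv] Rc[OF v] Rc[OF uv] m1 m2
        G3[OF W3[OF P(2) P(1) le1]] G3[OF W3[OF P(4) P(3) le2]] by simp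
  qed
  have c5: "\<forall>a\<in>S. R (D a) = D a \<and> D (R a) = R a"
  proof (rule all1)
    fix u assume u: "u \<in> words P"
    have s: "[Dw dl u] \<in> words P" "[Rw th u] \<in> words P" using u by (simp_all add: words_single Dw_P Rw_P)
    show "R (D (cl u)) = D (cl u) \<and> D (R (cl u)) = R (cl u)"
      using Dc[OF u] Rc[OF u] Rc[OF s(1)] Dc[OF s(2)] Dw_P[OF u] Rw_P[OF u]
      by (simp add: Dw_def Rw_def)
  qed
  have drc: "drc_semigroup S m D R" unfolding drc_semigroup_def using sg c1 c2 c3 c4 c5 by blast
  have pr: "projs S D = (\<lambda>p. cl [p]) ` P"
  proof
    show "projs S D \<subseteq> (\<lambda>p. cl [p]) ` P"
      unfolding projs_def using G1 Dc Dw_P by auto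
    show "(\<lambda>p. cl [p]) ` P \<subseteq> projs S D"
    proof
      fix a assume "a \<in> (\<lambda>p. cl [p]) ` P"
      then obtain p where p: "p \<in> P" "a = cl [p]" by blast
      have "D (cl [p]) = cl [p]" using Dc[OF words_single[OF p(1)]] p by (simp add: Dw_def)
      then show "a \<in> projs S D" unfolding projs_def using p inS[OF words_single[OF p(1)]]
        by (metis image_eqI)
    qed
  qed
  have gen: "proj_generated S m D" unfolding proj_generated_def
  proof
    show "sgen (projs S D) m \<subseteq> S"
    proof
      fix a assume "a \<in> sgen (projs S D) m"
      then show "a \<in> S"
      proof (induction rule: sgen.induct)
        case (base a) then show ?case using pr inS words_single by auto
      next
        case (mult a b) then show ?case using sg by (simp add: semigroup_on_def)
      qed
    qed
    have "\<And>w. w \<in> words P \<Longrightarrow> cl w \<in> sgen (projs S D) m"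
    proof -
      fix w show "w \<in> words P \<Longrightarrow> cl w \<in> sgen (projs S D) m"
      proof (induction w)
        case Nil then show ?case by (simp add: words_iff)
      next
        case (Cons p w)
        have p: "p \<in> P" using Cons.prems by (simp add: words_iff)
        have b: "cl [p] \<in> sgen (projs S D) m" using pr p by (auto intro: sgen.base)
        show ?case
        proof (cases "w = []")
          case True then show ?thesis using b by simp
        next
          case False
          then have w: "w \<in> words P" using Cons.prems by (simp add: words_iff)
          have "cl (p # w) = m (cl [p]) (cl w)" using G2[OF words_single[OF p] w] by simp
          then show ?thesis using sgen.mult[OF b Cons.IH[OF w]] by simp
        qed
      qed
    qed
    then show "S \<subseteq> sgen (projs S D) m" using G1 by blast
  qed
  have inj: "inj_on (\<lambda>p. cl [p]) P"
  proof (rule inj_onI)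
    fix p q assume p: "p \<in> P" and q: "q \<in> P" and e: "cl [p] = cl [q]"
    show "p = q" using G4[OF words_single[OF p] words_single[OF q] e] p q by (simp add: Dw_def)
  qed
  have bij: "bij_betw (\<lambda>p. cl [p]) P (projs S D)" using inj pr by (simp add: bij_betw_def)
  have hom: "\<forall>p\<in>P. \<forall>q\<in>P. cl [th p q] = pth m R (cl [p]) (cl [q]) \<and> cl [dl p q] = pdl m D (cl [p]) (cl [q])"
  proof (intro ballI)
    fix p q assume p: "p \<in> P" and q: "q \<in> P"
    have w: "[p] \<in> words P" "[q] \<in> words P" "[q, p] \<in> words P" "[p, q] \<in> words P"
      using p q by (auto simp: words_iff)
    show "cl [th p q] = pth m R (cl [p]) (cl [q]) \<and> cl [dl p q] = pdl m D (cl [p]) (cl [q])"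
      unfolding pth_def pdl_def using G2[OF w(2) w(1)] G2[OF w(1) w(2)] Rc[OF w(3)] Dc[OF w(4)] p q
      by (simp add: Rw_def Dw_def)
  qed
  show ?thesis using drc gen bij hom unfolding D_def R_def by blast
qed


lemma fclass_eq: "fcong P th dl u v \<Longrightarrow> fclass P th dl u = fclass P th dl v"
  unfolding fclass_def by (blast intro: fcong.trans fcong.sym)

lemma fclass_self: "u \<in> words P \<Longrightarrow> u \<in> fclass P th dl u"
  unfolding fclass_def by (auto simp: words_iff intro: fcong.refl)

lemma F_G1: "Fcar P th dl = fclass P th dl ` words P"
  by (auto simp: Fcar_def words_iff)

lemma F_G2: "u \<in> words P \<Longrightarrow> v \<in> words P \<Longrightarrow>
   Fmult P th dl (fclass P th dl u) (fclass P th dl v) = fclass P th dl (u @ v)"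
proof -
  assume u: "u \<in> words P" and v: "v \<in> words P"
  define a where "a = (SOME a. a \<in> fclass P th dl u)"
  define b where "b = (SOME b. b \<in> fclass P th dl v)"
  have a: "fcong P th dl u a" using someI[of "\<lambda>a. a \<in> fclass P th dl u", OF fclass_self[OF u]]
    unfolding a_def fclass_def by simp
  have b: "fcong P th dl v b" using someI[of "\<lambda>a. a \<in> fclass P th dl v", OF fclass_self[OF v]]
    unfolding b_def fclass_def by simp
  have bP: "set b \<subseteq> P" using fc_W[OF b] by (simp add: words_iff)
  have uP: "set u \<subseteq> P" using u by (simp add: words_iff)
  have 1: "fcong P th dl (a @ b) (u @ b)" using fcong.ctx[OF fcong.sym[OF a], of "[]" b] bP by simp
  have 2: "fcong P th dl (u @ b) (u @ v)" using fcong.ctx[OF fcong.sym[OF b], of u "[]"] uP by simp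
  show ?thesis unfolding Fmult_def a_def[symmetric] b_def[symmetric]
    using fclass_eq[OF fcong.trans[OF 1 2]] .
qed

lemma F_G4: "u \<in> words P \<Longrightarrow> v \<in> words P \<Longrightarrow> fclass P th dl u = fclass P th dl v \<Longrightarrow>
    Dw dl u = Dw dl v \<and> Rw th u = Rw th v"
proof -
  assume u: "u \<in> words P" and v: "v \<in> words P" and e: "fclass P th dl u = fclass P th dl v"
  have "fcong P th dl u v" using fclass_self[OF v] e unfolding fclass_def by blast
  then show ?thesis using fc_inv by blast
qed

lemma F_gen:
  "drc_semigroup (Fcar P th dl) (Fmult P th dl) (FD P th dl) (FR P th dl)
     \<and> proj_generated (Fcar P th dl) (Fmult P th dl) (FD P th dl)
     \<and> bij_betw (\<lambda>p. fclass P th dl [p]) P (projs (Fcar P th dl) (FD P th dl))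
     \<and> (\<forall>p\<in>P. \<forall>q\<in>P. fclass P th dl [th p q] = pth (Fmult P th dl) (FR P th dl) (fclass P th dl [p]) (fclass P th dl [q])
                     \<and> fclass P th dl [dl p q] = pdl (Fmult P th dl) (FD P th dl) (fclass P th dl [p]) (fclass P th dl [q]))"
  unfolding FD_def FR_def
  by (rule generic[OF F_G1 F_G2 fclass_eq F_G4])

lemma Mword_single: "Mword P th dl [p] = hat P th dl p"
  by (simp add: Mword_def)

lemma Mword_eq: "w \<in> words P \<Longrightarrow> Mword P th dl w = (restrict (rapp th w) P, restrict (dapp dl w) P)"
proof (induction w rule: rev_induct)
  case Nil then show ?case by (simp add: words_iff)
next
  case (snoc q w)
  have q: "q \<in> P" and wP: "set w \<subseteq> P" using snoc.prems by (auto simp: words_iff)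
  show ?case
  proof (cases "w = []")
    case True
    have "rapp th [q] = th q" "dapp dl [q] = dl q" by (auto simp: fun_eq_iff)
    then show ?thesis using True by (simp add: Mword_def hat_def restrict_def)
  next
    case False
    then have w: "w \<in> words P" using wP by (simp add: words_iff)
    have "Mword P th dl (w @ [q]) = Mmult P (Mword P th dl w) (hat P th dl q)"
      using False by (cases w) (simp_all add: Mword_def)
    also have "... = (restrict (rapp th (w @ [q])) P, restrict (dapp dl (w @ [q])) P)"
      unfolding snoc.IH[OF w] Mmult_def hat_def
      using wP q by (auto simp: fun_eq_iff compose_def restrict_def)
    finally show ?thesis .
  qed
qed

lemma M_G2: "u \<in> words P \<Longrightarrow> v \<in> words P \<Longrightarrow>
   Mmult P (Mword P th dl u) (Mword P th dl v) = Mword P th dl (u @ v)"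
  using words_app[of u v]
  by (simp add: Mword_eq Mmult_def fun_eq_iff compose_def restrict_def words_iff)

lemma M_G1: "Mcar P th dl = Mword P th dl ` words P"
proof
  show "Mcar P th dl \<subseteq> Mword P th dl ` words P"
  proof
    fix a assume "a \<in> Mcar P th dl"
    then show "a \<in> Mword P th dl ` words P" unfolding Mcar_def
    proof (induction rule: sgen.induct)
      case (base a)
      then obtain p where "p \<in> P" "a = hat P th dl p" by blast
      then show ?case using Mword_single[of p] words_single[of p] by (metis image_eqI)
    next
      case (mult a b)
      then obtain u v where "u \<in> words P" "v \<in> words P" "a = Mword P th dl u" "b = Mword P th dl v" by blast
      then show ?case using M_G2 words_app by (metis image_eqI)
    qed
  qed
  show "Mword P th dl ` words P \<subseteq> Mcar P th dl"
  proof
    fix a assume "a \<in> Mword P th dl ` words P"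
    then obtain w where w: "w \<in> words P" "a = Mword P th dl w" by blast
    have "w \<in> words P \<Longrightarrow> Mword P th dl w \<in> Mcar P th dl"
    proof (induction w rule: rev_induct)
      case Nil then show ?case by (simp add: words_iff)
    next
      case (snoc q w)
      have q: "q \<in> P" and wP: "set w \<subseteq> P" using snoc.prems by (auto simp: words_iff)
      have b: "Mword P th dl [q] \<in> Mcar P th dl"
        unfolding Mcar_def Mword_single using q by (auto intro: sgen.base)
      show ?case
      proof (cases "w = []")
        case True then show ?thesis using b by simp
      next
        case False
        then have w: "w \<in> words P" using wP by (simp add: words_iff)
        have "Mword P th dl (w @ [q]) = Mmult P (Mword P th dl w) (Mword P th dl [q])"
          using M_G2[OF w words_single[OF q]] by simp
        then show ?thesis using sgen.mult[OF snoc.IH[OF w, unfolded Mcar_def] b[unfolded Mcar_def]]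
          unfolding Mcar_def by simp
      qed
    qed
    then show "a \<in> Mcar P th dl" using w by simp
  qed
qed

lemma M_G3: "fcong P th dl u v \<Longrightarrow> Mword P th dl u = Mword P th dl v"
proof -
  assume h: "fcong P th dl u v"
  have W: "u \<in> words P" "v \<in> words P" using fc_W[OF h] by auto
  note I = fc_inv[OF h]
  have 1: "restrict (rapp th u) P = restrict (rapp th v) P" using I by (intro restrict_ext) auto
  have 2: "restrict (dapp dl u) P = restrict (dapp dl v) P" using I by (intro restrict_ext) auto
  show ?thesis unfolding Mword_eq[OF W(1)] Mword_eq[OF W(2)] 1 2 ..
qed

lemma M_G4: "u \<in> words P \<Longrightarrow> v \<in> words P \<Longrightarrow> Mword P th dl u = Mword P th dl v \<Longrightarrow>
    Dw dl u = Dw dl v \<and> Rw th u = Rw th v"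
proof -
  assume u: "u \<in> words P" and v: "v \<in> words P" and e: "Mword P th dl u = Mword P th dl v"
  have e1: "restrict (rapp th u) P = restrict (rapp th v) P" and e2: "restrict (dapp dl u) P = restrict (dapp dl v) P"
    using e by (simp_all add: Mword_eq[OF u] Mword_eq[OF v])
  have "\<forall>y\<in>P. rapp th u y = rapp th v y" using e1 by (metis restrict_apply')
  moreover have "\<forall>y\<in>P. dapp dl u y = dapp dl v y" using e2 by (metis restrict_apply')
  ultimately show ?thesis using D_det[OF u v] R_det[OF u v] by blast
qed

lemma M_gen:
  "drc_semigroup (Mcar P th dl) (Mmult P) (MD P th dl) (MR P th dl)
     \<and> proj_generated (Mcar P th dl) (Mmult P) (MD P th dl)
     \<and> bij_betw (\<lambda>p. Mword P th dl [p]) P (projs (Mcar P th dl) (MD P th dl))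
     \<and> (\<forall>p\<in>P. \<forall>q\<in>P. Mword P th dl [th p q] = pth (Mmult P) (MR P th dl) (Mword P th dl [p]) (Mword P th dl [q])
                     \<and> Mword P th dl [dl p q] = pdl (Mmult P) (MD P th dl) (Mword P th dl [p]) (Mword P th dl [q]))"
proof -
  have h: "hat P th dl = (\<lambda>p. Mword P th dl [p])" by (simp add: fun_eq_iff Mword_single)
  show ?thesis unfolding MD_def MR_def h
    by (rule generic[OF M_G1 M_G2 M_G3 M_G4])
qed

end

lemma iso_from:
  assumes bij: "bij_betw e P Q"
    and hom: "\<forall>p\<in>P. \<forall>q\<in>P. e (th p q) = th' (e p) (e q) \<and> e (dl p q) = dl' (e p) (e q)"
    and cl: "\<forall>p\<in>P. \<forall>q\<in>P. th p q \<in> P \<and> dl p q \<in> P"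
  shows "pa_iso Q th' dl' P th dl"
  unfolding pa_iso_def
proof (intro exI conjI ballI)
  show "bij_betw (inv_into P e) Q P" using bij_betw_inv_into[OF bij] .
  fix a b assume a: "a \<in> Q" and b: "b \<in> Q"
  obtain p q where p: "p \<in> P" "a = e p" and q: "q \<in> P" "b = e q"
    using a b bij by (auto simp: bij_betw_def)
  have inj: "inj_on e P" using bij by (simp add: bij_betw_def)
  show "inv_into P e (th' a b) = th (inv_into P e a) (inv_into P e b)"
    using hom cl p q inj by (metis inv_into_f_f)
  show "inv_into P e (dl' a b) = dl (inv_into P e a) (inv_into P e b)"
    using hom cl p q inj by (metis inv_into_f_f)
qed

lemma iso_comp:
  assumes "pa_iso A ta da B tb db"
    and bij: "bij_betw g B C"
    and hom: "\<forall>p\<in>B. \<forall>q\<in>B. g (tb p q) = tc (g p) (g q) \<and> g (db p q) = dc (g p) (g q)"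
  shows "pa_iso A ta da C tc dc"
proof -
  obtain f where f: "bij_betw f A B"
    "\<forall>p\<in>A. \<forall>q\<in>A. f (ta p q) = tb (f p) (f q) \<and> f (da p q) = db (f p) (f q)"
    using assms(1) unfolding pa_iso_def by blast
  have fa: "\<And>a. a \<in> A \<Longrightarrow> f a \<in> B" using f(1) by (auto simp: bij_betw_def)
  show ?thesis unfolding pa_iso_def
  proof (intro exI[of _ "g \<circ> f"] conjI ballI)
    show "bij_betw (g \<circ> f) A C" using bij_betw_trans[OF f(1) bij] .
    fix a b assume a: "a \<in> A" and b: "b \<in> A"
    show "(g \<circ> f) (ta a b) = tc ((g \<circ> f) a) ((g \<circ> f) b)" using f(2) hom fa a b by simp
    show "(g \<circ> f) (da a b) = dc ((g \<circ> f) a) ((g \<circ> f) b)" using f(2) hom fa a b by simp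
  qed
qed

theorem theorem8p9:
  fixes P :: "'a set" and th dl :: "'a \<Rightarrow> 'a \<Rightarrow> 'a"
  assumes "proj_alg P th dl"
  shows "drc_semigroup (Fcar P th dl) (Fmult P th dl) (FD P th dl) (FR P th dl)
       \<and> proj_generated (Fcar P th dl) (Fmult P th dl) (FD P th dl)
       \<and> drc_semigroup (Mcar P th dl) (Mmult P) (MD P th dl) (MR P th dl)
       \<and> proj_generated (Mcar P th dl) (Mmult P) (MD P th dl)
       \<and> pa_iso (projs (Fcar P th dl) (FD P th dl))
                (pth (Fmult P th dl) (FR P th dl)) (pdl (Fmult P th dl) (FD P th dl))
                (projs (Mcar P th dl) (MD P th dl))
                (pth (Mmult P) (MR P th dl)) (pdl (Mmult P) (MD P th dl))
       \<and> pa_iso (projs (Mcar P th dl) (MD P th dl))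
                (pth (Mmult P) (MR P th dl)) (pdl (Mmult P) (MD P th dl))
                P th dl
       \<and> pa_iso (projs (Fcar P th dl) (FD P th dl))
                (pth (Fmult P th dl) (FR P th dl)) (pdl (Fmult P th dl) (FD P th dl))
                P th dl"
proof -
  interpret pa P th dl using assms by unfold_locales
  have cl: "\<forall>p\<in>P. \<forall>q\<in>P. th p q \<in> P \<and> dl p q \<in> P" by simp
  note F1 = F_gen[THEN conjunct1] and F2 = F_gen[THEN conjunct2, THEN conjunct1]
    and F3 = F_gen[THEN conjunct2, THEN conjunct2, THEN conjunct1]
    and F4 = F_gen[THEN conjunct2, THEN conjunct2, THEN conjunct2]
  note M1 = M_gen[THEN conjunct1] and M2 = M_gen[THEN conjunct2, THEN conjunct1]
    and M3 = M_gen[THEN conjunct2, THEN conjunct2, THEN conjunct1]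
    and M4 = M_gen[THEN conjunct2, THEN conjunct2, THEN conjunct2]
  note isoF = iso_from[OF F3 F4 cl]
  note isoM = iso_from[OF M3 M4 cl]
  note isoFM = iso_comp[OF isoF M3 M4]
  show ?thesis using F1 F2 M1 M2 isoFM isoM isoF by (intro conjI)
qed

end
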